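(* Let $I$ be a monomial ideal of a polynomial ring $Q=\Bbbk[x_1,\ldots,x_n]$, let $\mathbb{T}$ be the Taylor resolution of $Q/I$ (with respect to a fixed total order on $G(I)$), equipped with Gemeda's dg algebra structure, and let $A$ be a Morse matching on the Taylor graph of $I$. Suppose that $A_+$ is closed under taking supersets, i.e., if $V\in A_+$ and $V\subseteq W\subseteq G(I)$ then $W\in A_+$. Then the subcomplex $\mathbb{J}$ induced by $A$ is a dg ideal of $\mathbb{T}$ (i.e., $\mathbb{T}\mathbb{J}\subseteq\mathbb{J}$), and consequently $\mathbb{T}/\mathbb{J}$ admits the structure of a differential graded algebra.
   Context: Let $G(I)$ denote the set of minimal monomial generators of $I$, with a fixed total order $<$. For $U\subseteq G(I)$ put $m_U=\mathrm{lcm}\{u: u\in U\}$ ($m_\emptyset=1$). The Taylor resolution $\mathbb{T}$ of $Q/I$ has $\mathbb{T}_i$ free with basis $\{e_U: U\subseteq G(I), |U|=i\}$ and differential $\partial(e_U)=\sum_{u\in U}(-1)^{\sigma(u,U)}\frac{m_U}{m_{U\setminus\{u\}}}e_{U\setminus\{u\}}$, where $\sigma(u,U)=|\{v\in U: v<u\}|$. Gemeda's product: $e_V\cdot e_W=(-1)^{\sigma(V,W)}\frac{m_Vm_W}{m_{V\cup W}}e_{V\cup W}$ if $V\cap W=\emptyset$ and $0$ otherwise, where $\sigma(V,W)=|\{(v,w)\in V\times W: v>w\}|$; this makes $\mathbb{T}$ a dg algebra (graded-commutative, associative, unital, squares of odd elements zero, Leibniz rule $\partial(ab)=\partial(a)b+(-1)^{|a|}a\partial(b)$).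 The Taylor graph of $I$ is the directed graph whose vertices are the subsets of $G(I)$, with an edge $\sigma\to\tau$ iff $\tau\subseteq\sigma$, $|\tau|=|\sigma|-1$, $m_\sigma=m_\tau$ and $|\tau|\ge 2$. A Morse matching is a set $A$ of edges of the Taylor graph, no two sharing a vertex, such that reversing the edges of $A$ yields an acyclic directed graph; $A_+$ is the set of sources and $A_-$ the set of targets of edges in $A$. The subcomplex induced by $A$ is $\mathbb{J}=\bigoplus_{V\in A_+}(Qe_V\oplus Q\partial(e_V))$, i.e., the subcomplex spanned by $e_V$ and $\partial(e_V)$ for $V\in A_+$. A subcomplex $\mathbb{J}$ of a dg algebra $\mathbb{F}$ is a dg ideal if $\mathbb{F}\mathbb{J}\subseteq\mathbb{J}$. *)

theory Defs
  imports Main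
begin

text \<open>Monomials in the variables of the finite type 'v are exponent vectors 'v => nat.
  The polynomial ring is Q = k[x_v : v in 'v] over a field k.\<close>

type_synonym 'v mon = "'v \<Rightarrow> nat"

definition mdvd :: "'v mon \<Rightarrow> 'v mon \<Rightarrow> bool" where
  "mdvd a b = (\<forall>i. a i \<le> b i)"

definition madd :: "'v mon \<Rightarrow> 'v mon \<Rightarrow> 'v mon" where
  "madd a b = (\<lambda>i. a i + b i)"

text \<open>Exponent vector of the quotient a / b (used only when b divides a).\<close>
definition msub :: "'v mon \<Rightarrow> 'v mon \<Rightarrow> 'v mon" where
  "msub a b = (\<lambda>i. a i - b i)"

text \<open>m_U = lcm of the monomials in U; m_{} = 1.\<close>
definition mlcm :: "'v mon set \<Rightarrow> 'v mon" where
  "mlcm U = (\<lambda>i. Max (insert 0 ((\<lambda>u. u i) ` U)))"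

text \<open>A monomial ideal is determined by the set of monomials it contains,
  which is closed under multiplication by monomials.\<close>
definition mono_ideal :: "'v mon set \<Rightarrow> bool" where
  "mono_ideal I = (\<forall>a b. a \<in> I \<longrightarrow> mdvd a b \<longrightarrow> b \<in> I)"

definition mingens :: "'v mon set \<Rightarrow> 'v mon set" where
  "mingens I = {m \<in> I. \<forall>m'\<in>I. mdvd m' m \<longrightarrow> m' = m}"

text \<open>The fixed total order on G(I) is a strict order r; (v,u) in r means v < u.\<close>
definition sigma_el :: "('v mon \<times> 'v mon) set \<Rightarrow> 'v mon \<Rightarrow> 'v mon set \<Rightarrow> nat" where
  "sigma_el r u U = card {v \<in> U. (v, u) \<in> r}"

definition sigma_set :: "('v mon \<times> 'v mon) set \<Rightarrow> 'v mon set \<Rightarrow> 'v mon set \<Rightarrow> nat" where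
  "sigma_set r V W = card {(v, w). v \<in> V \<and> w \<in> W \<and> (w, v) \<in> r}"

text \<open>Elements of the Taylor complex T = (+)_U Q e_U are represented by their
  k-coefficients: f (a, U) is the coefficient of x^a e_U.\<close>
definition taylor :: "'v mon set \<Rightarrow> ('v mon \<times> 'v mon set \<Rightarrow> 'k::field) set" where
  "taylor G = {f. finite {p. f p \<noteq> 0} \<and>
      (\<forall>a U. f (a, U) \<noteq> 0 \<longrightarrow> finite U \<and> U \<subseteq> G)}"

definition tsupp :: "('a \<Rightarrow> 'k::field) \<Rightarrow> 'a set" where
  "tsupp f = {p. f p \<noteq> 0}"

definition tbasis :: "'v mon \<Rightarrow> 'v mon set \<Rightarrow> ('v mon \<times> 'v mon set \<Rightarrow> 'k::field)" where
  "tbasis a U = (\<lambda>p. if p = (a, U) then 1 else 0)"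

definition tmul_basis :: "('v mon \<times> 'v mon) set \<Rightarrow> 'v mon \<Rightarrow> 'v mon set \<Rightarrow> 'v mon \<Rightarrow> 'v mon set
    \<Rightarrow> ('v mon \<times> 'v mon set \<Rightarrow> 'k::field)" where
  "tmul_basis r a V b W =
     (if V \<inter> W = {}
      then (\<lambda>p. if p = (madd (madd a b) (msub (madd (mlcm V) (mlcm W)) (mlcm (V \<union> W))), V \<union> W)
                 then (-1) ^ sigma_set r V W else 0)
      else (\<lambda>p. 0))"

definition tmul :: "('v mon \<times> 'v mon) set \<Rightarrow> ('v mon \<times> 'v mon set \<Rightarrow> 'k::field)
    \<Rightarrow> ('v mon \<times> 'v mon set \<Rightarrow> 'k) \<Rightarrow> ('v mon \<times> 'v mon set \<Rightarrow> 'k)" where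
  "tmul r f g = (\<lambda>c. \<Sum>p\<in>tsupp f. \<Sum>q\<in>tsupp g.
       f p * g q * tmul_basis r (fst p) (snd p) (fst q) (snd q) c)"

definition tdiff_basis :: "('v mon \<times> 'v mon) set \<Rightarrow> 'v mon \<Rightarrow> 'v mon set
    \<Rightarrow> ('v mon \<times> 'v mon set \<Rightarrow> 'k::field)" where
  "tdiff_basis r a U = (\<lambda>c. \<Sum>u\<in>U.
       if c = (madd a (msub (mlcm U) (mlcm (U - {u}))), U - {u}) then (-1) ^ sigma_el r u U else 0)"

definition tdiff :: "('v mon \<times> 'v mon) set \<Rightarrow> ('v mon \<times> 'v mon set \<Rightarrow> 'k::field)
    \<Rightarrow> ('v mon \<times> 'v mon set \<Rightarrow> 'k)" where
  "tdiff r f = (\<lambda>c. \<Sum>p\<in>tsupp f. f p * tdiff_basis r (fst p) (snd p) c)"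

inductive_set kspan :: "('a \<Rightarrow> 'k::field) set \<Rightarrow> ('a \<Rightarrow> 'k) set" for S where
  zero: "(\<lambda>_. 0) \<in> kspan S"
| add: "x \<in> kspan S \<Longrightarrow> g \<in> S \<Longrightarrow> (\<lambda>p. x p + c * g p) \<in> kspan S"

definition taylor_edges :: "'v mon set \<Rightarrow> ('v mon set \<times> 'v mon set) set" where
  "taylor_edges G = {(\<sigma>, \<tau>). finite \<sigma> \<and> \<sigma> \<subseteq> G \<and> \<tau> \<subseteq> \<sigma> \<and> card \<sigma> = card \<tau> + 1
      \<and> mlcm \<sigma> = mlcm \<tau> \<and> 2 \<le> card \<tau>}"

definition morse_matching :: "'v mon set \<Rightarrow> ('v mon set \<times> 'v mon set) set \<Rightarrow> bool" where
  "morse_matching G A =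
     (A \<subseteq> taylor_edges G \<and>
      (\<forall>e\<in>A. \<forall>e'\<in>A. e \<noteq> e' \<longrightarrow> {fst e, snd e} \<inter> {fst e', snd e'} = {}) \<and>
      acyclic ((taylor_edges G - A) \<union> A\<inverse>))"

text \<open>The subcomplex J induced by A: the Q-span of e_V and d(e_V), V in A_+,
  i.e. the k-span of x^a e_V and x^a d(e_V) = d(x^a e_V).\<close>
definition induced_sub :: "('v mon \<times> 'v mon) set \<Rightarrow> ('v mon set \<times> 'v mon set) set
    \<Rightarrow> ('v mon \<times> 'v mon set \<Rightarrow> 'k::field) set" where
  "induced_sub r A = kspan ({tbasis a V | a V. V \<in> fst ` A} \<union>
                            {tdiff r (tbasis a V) | a V. V \<in> fst ` A})"

definition dg_ideal :: "'v mon set \<Rightarrow> ('v mon \<times> 'v mon) set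
    \<Rightarrow> ('v mon \<times> 'v mon set \<Rightarrow> 'k::field) set \<Rightarrow> bool" where
  "dg_ideal G r J = (J \<subseteq> taylor G \<and> (\<forall>j\<in>J. tdiff r j \<in> J) \<and>
      (\<forall>f\<in>taylor G. \<forall>j\<in>J. tmul r f j \<in> J))"

end

theory Submission imports Defs begin

lemma kspan_base: "g \<in> S \<Longrightarrow> g \<in> kspan S"
  using kspan.add[OF kspan.zero, of g S 1] by simp

lemma kspan_add:
  assumes "x \<in> kspan S" "y \<in> kspan S" shows "(\<lambda>p. x p + y p) \<in> kspan S"
  using assms(2)
proof induct
  case zero then show ?case using assms(1) by simp
next
  case (add y g c)
  have "(\<lambda>p. x p + (y p + c * g p)) = (\<lambda>p. (\<lambda>p. x p + y p) p + c * g p)" by (simp add: add.assoc)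
  then show ?case using kspan.add[OF add(2) add(3), of c] by simp
qed

lemma kspan_smult:
  assumes "x \<in> kspan S" shows "(\<lambda>p. c * x p) \<in> kspan S"
  using assms
proof induct
  case zero then show ?case using kspan.zero by simp
next
  case (add y g d)
  have "(\<lambda>p. c * (y p + d * g p)) = (\<lambda>p. (\<lambda>p. c * y p) p + (c * d) * g p)" by (simp add: algebra_simps)
  then show ?case using kspan.add[OF add(2) add(3), of "c*d"] by simp
qed

lemma kspan_sum:
  assumes "finite F" "\<And>i. i \<in> F \<Longrightarrow> h i \<in> kspan S"
  shows "(\<lambda>p. \<Sum>i\<in>F. h i p) \<in> kspan S"
  using assms
proof (induct F rule: finite_induct)
  case empty then show ?case using kspan.zero by simp
next
  case (insert x F)
  have "(\<lambda>p. \<Sum>i\<in>insert x F. h i p) = (\<lambda>p. h x p + (\<Sum>i\<in>F. h i p))"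
    using insert by simp
  then show ?case using kspan_add[OF insert(4)[of x] insert(3)] insert by simp
qed

lemma kspan_lin_comb:
  assumes "x \<in> kspan S" "y \<in> kspan S" shows "(\<lambda>p. c * x p + d * y p) \<in> kspan S"
  using kspan_add[OF kspan_smult[OF assms(1)] kspan_smult[OF assms(2)]] by simp

definition lin :: "('a \<Rightarrow> 'b \<Rightarrow> 'k::field) \<Rightarrow> ('a \<Rightarrow> 'k) \<Rightarrow> 'b \<Rightarrow> 'k" where
  "lin K g = (\<lambda>c. \<Sum>p\<in>tsupp g. g p * K p c)"

lemma lin_superset:
  assumes "finite S" "tsupp g \<subseteq> S"
  shows "lin K g c = (\<Sum>p\<in>S. g p * K p c)"
  unfolding lin_def
  by (rule sum.mono_neutral_left) (use assms in \<open>auto simp: tsupp_def\<close>)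

lemma lin_add:
  assumes "finite (tsupp x)" "finite (tsupp g)"
  shows "lin K (\<lambda>p. x p + c * g p) = (\<lambda>z. lin K x z + c * lin K g z)"
proof
  fix z
  let ?S = "tsupp x \<union> tsupp g"
  have f: "finite ?S" using assms by simp
  have "tsupp (\<lambda>p. x p + c * g p) \<subseteq> ?S" by (auto simp: tsupp_def)
  then have "lin K (\<lambda>p. x p + c * g p) z = (\<Sum>p\<in>?S. (x p + c * g p) * K p z)"
    by (rule lin_superset[OF f])
  also have "\<dots> = (\<Sum>p\<in>?S. x p * K p z) + c * (\<Sum>p\<in>?S. g p * K p z)"
    by (simp add: distrib_right sum.distrib sum_distrib_left mult.assoc)
  also have "\<dots> = lin K x z + c * lin K g z"
    using lin_superset[OF f, of x K z] lin_superset[OF f, of g K z] by (simp add: tsupp_def subset_iff)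
  finally show "lin K (\<lambda>p. x p + c * g p) z = lin K x z + c * lin K g z" .
qed

lemma lin_zero: "lin K (\<lambda>_. 0) = (\<lambda>_. 0)"
  by (simp add: lin_def tsupp_def)

lemma tsupp_add_fin: "finite (tsupp x) \<Longrightarrow> finite (tsupp g) \<Longrightarrow> finite (tsupp (\<lambda>p. x p + c * g p))"
  by (rule finite_subset[of _ "tsupp x \<union> tsupp g"]) (auto simp: tsupp_def)

lemma kspan_lin:
  assumes "x \<in> kspan S" "\<And>g. g \<in> S \<Longrightarrow> finite (tsupp g) \<and> lin K g \<in> kspan T"
  shows "finite (tsupp x) \<and> lin K x \<in> kspan T"
  using assms(1)
proof induct
  case zero then show ?case by (simp add: lin_zero kspan.zero tsupp_def)
next
  case (add y g c)
  have g: "finite (tsupp g)" "lin K g \<in> kspan T" using assms(2)[OF add(3)] by auto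
  have "lin K (\<lambda>p. y p + c * g p) = (\<lambda>z. lin K y z + c * lin K g z)"
    using lin_add add(2) g(1) by blast
  moreover have "(\<lambda>z. 1 * lin K y z + c * lin K g z) \<in> kspan T"
    using kspan_lin_comb[of "lin K y" T "lin K g" 1 c] add(2) g(2) by blast
  moreover have "finite (tsupp (\<lambda>p. y p + c * g p))" using tsupp_add_fin[of y g c] add(2) g(1) by blast
  ultimately show ?case by simp
qed

lemma tbasis_eq: "(if c = p then s else 0) = s * tbasis (fst p) (snd p) c"
  by (simp add: tbasis_def)

lemma lin_basis_sum:
  assumes "finite F"
  shows "lin K (\<lambda>c. \<Sum>u\<in>F. s u * tbasis (x u) (y u) c) = (\<lambda>z. \<Sum>u\<in>F. s u * K (x u, y u) z)"
proof
  fix z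
  let ?S = "(\<lambda>u. (x u, y u)) ` F"
  have f: "finite ?S" using assms by simp
  have "tsupp (\<lambda>c. \<Sum>u\<in>F. s u * tbasis (x u) (y u) c) \<subseteq> ?S"
  proof
    fix p assume "p \<in> tsupp (\<lambda>c. \<Sum>u\<in>F. s u * tbasis (x u) (y u) c)"
    then have "(\<Sum>u\<in>F. s u * tbasis (x u) (y u) p) \<noteq> 0" by (simp add: tsupp_def)
    then obtain u where "u \<in> F" "s u * tbasis (x u) (y u) p \<noteq> 0" by (rule sum.not_neutral_contains_not_neutral)
    then show "p \<in> ?S" by (auto simp: tbasis_def split: if_splits)
  qed
  then have "lin K (\<lambda>c. \<Sum>u\<in>F. s u * tbasis (x u) (y u) c) z
     = (\<Sum>p\<in>?S. (\<Sum>u\<in>F. s u * tbasis (x u) (y u) p) * K p z)"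
    by (rule lin_superset[OF f])
  also have "\<dots> = (\<Sum>u\<in>F. \<Sum>p\<in>?S. s u * tbasis (x u) (y u) p * K p z)"
    by (simp only: sum_distrib_right) (rule sum.swap)
  also have "\<dots> = (\<Sum>u\<in>F. s u * K (x u, y u) z)"
  proof (rule sum.cong[OF refl])
    fix u assume u: "u \<in> F"
    have "(\<Sum>p\<in>?S. s u * tbasis (x u) (y u) p * K p z) = (\<Sum>p\<in>?S. if p = (x u, y u) then s u * K (x u, y u) z else 0)"
      by (rule sum.cong) (auto simp: tbasis_def)
    also have "\<dots> = s u * K (x u, y u) z" using f u by (simp add: sum.delta)
    finally show "(\<Sum>p\<in>?S. s u * tbasis (x u) (y u) p * K p z) = s u * K (x u, y u) z" .
  qed
  finally show "lin K (\<lambda>c. \<Sum>u\<in>F. s u * tbasis (x u) (y u) c) z = (\<Sum>u\<in>F. s u * K (x u, y u) z)" .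
qed

lemma lin_tbasis: "lin K (tbasis a U) = K (a, U)"
proof -
  have h: "tsupp (tbasis a U) = {(a,U)}" by (auto simp: tsupp_def tbasis_def)
  show ?thesis unfolding lin_def h by (simp add: tbasis_def)
qed

lemma tdiff_lin: "tdiff r g = lin (\<lambda>p. tdiff_basis r (fst p) (snd p)) g"
  by (simp add: tdiff_def lin_def)

lemma tmul_lin: "tmul r (tbasis a W) g = lin (\<lambda>q. tmul_basis r a W (fst q) (snd q)) g"
proof -
  have h: "tsupp (tbasis a W) = {(a,W)}" by (auto simp: tsupp_def tbasis_def)
  show ?thesis unfolding lin_def tmul_def h by (simp add: tbasis_def)
qed

lemma tmul_split:
  assumes "finite (tsupp f)"
  shows "tmul r f g = (\<lambda>c. \<Sum>p\<in>tsupp f. f p * tmul r (tbasis (fst p) (snd p)) g c)"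
  unfolding tmul_lin by (auto simp: tmul_def lin_def sum_distrib_left mult.assoc)

lemma tdiff_basis_eq:
  "tdiff_basis r a U = (\<lambda>c. \<Sum>u\<in>U. (-1) ^ sigma_el r u U *
        tbasis (madd a (msub (mlcm U) (mlcm (U - {u})))) (U - {u}) c)"
  unfolding tdiff_basis_def tbasis_def by (intro ext sum.cong) auto


lemma mlcm_mono: "finite V \<Longrightarrow> U \<subseteq> V \<Longrightarrow> mlcm U i \<le> mlcm V i"
  unfolding mlcm_def by (rule Max_mono) auto

lemma mlcm_ge: "finite V \<Longrightarrow> u \<in> V \<Longrightarrow> u i \<le> mlcm V i"
  unfolding mlcm_def by (rule Max_ge) auto

lemma mlcm_un_le:
  assumes "finite V" "finite W" shows "mlcm (W \<union> V) i \<le> mlcm W i + mlcm V i"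
proof -
  have "\<forall>x\<in>insert 0 ((\<lambda>u. u i) ` (W \<union> V)). x \<le> mlcm W i + mlcm V i"
    using mlcm_ge[OF assms(1)] mlcm_ge[OF assms(2)] by (fastforce intro: trans_le_add1 trans_le_add2)
  then show ?thesis unfolding mlcm_def[of "W \<union> V"] using assms by (subst Max_le_iff) auto
qed

lemma mono_tele:
  assumes "finite V" "W \<subseteq> U" "U \<subseteq> V"
  shows "madd (madd a (msub (mlcm V) (mlcm U))) (msub (mlcm U) (mlcm W)) = madd a (msub (mlcm V) (mlcm W))"
proof
  fix i
  have "mlcm U i \<le> mlcm V i" by (rule mlcm_mono[OF assms(1) assms(3)])
  moreover have "mlcm W i \<le> mlcm U i" by (rule mlcm_mono[OF finite_subset[OF assms(3) assms(1)] assms(2)])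
  ultimately show "madd (madd a (msub (mlcm V) (mlcm U))) (msub (mlcm U) (mlcm W)) i = madd a (msub (mlcm V) (mlcm W)) i"
    unfolding madd_def msub_def by simp
qed

lemma pair_cancel:
  fixes F :: "'a \<Rightarrow> 'a \<Rightarrow> 'k::comm_ring_1"
  assumes fin: "finite V"
    and tot: "\<And>u w. u \<in> V \<Longrightarrow> w \<in> V \<Longrightarrow> u \<noteq> w \<Longrightarrow> (u,w) \<in> r \<or> (w,u) \<in> r"
    and asy: "\<And>u w. (u,w) \<in> r \<Longrightarrow> (w,u) \<notin> r"
    and anti: "\<And>u w. u \<in> V \<Longrightarrow> w \<in> V \<Longrightarrow> (u,w) \<in> r \<Longrightarrow> F w u = - F u w"
  shows "(\<Sum>u\<in>V. \<Sum>w\<in>V-{u}. F u w) = 0"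
proof -
  let ?P = "Sigma V (\<lambda>u. V - {u})"
  let ?P1 = "{p \<in> ?P. p \<in> r}"
  let ?P2 = "{p \<in> ?P. prod.swap p \<in> r}"
  have fP: "finite ?P" using fin by simp
  have "(\<Sum>u\<in>V. \<Sum>w\<in>V-{u}. F u w) = (\<Sum>p\<in>?P. F (fst p) (snd p))"
    using sum.Sigma[of V "\<lambda>u. V-{u}" F] fin by (simp add: split_def)
  also have "?P = ?P1 \<union> ?P2" using tot by fastforce
  also have "(\<Sum>p\<in>?P1 \<union> ?P2. F (fst p) (snd p)) = (\<Sum>p\<in>?P1. F (fst p) (snd p)) + (\<Sum>p\<in>?P2. F (fst p) (snd p))"
    by (rule sum.union_disjoint) (use fP asy in auto)
  also have "?P2 = prod.swap ` ?P1" by (auto simp: image_iff)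
  also have "(\<Sum>p\<in>prod.swap ` ?P1. F (fst p) (snd p)) = (\<Sum>p\<in>?P1. F (snd p) (fst p))"
    by (subst sum.reindex) (auto simp: inj_on_def)
  also have "\<dots> = (\<Sum>p\<in>?P1. - F (fst p) (snd p))"
    by (rule sum.cong) (auto intro: anti)
  finally show ?thesis by (simp add: sum_negf)
qed

locale tset =
  fixes G :: "'v mon set" and r :: "('v mon \<times> 'v mon) set"
  assumes tot: "\<And>x y. x \<in> G \<Longrightarrow> y \<in> G \<Longrightarrow> x \<noteq> y \<Longrightarrow> (x,y) \<in> r \<or> (y,x) \<in> r"
    and asy: "\<And>x y. (x,y) \<in> r \<Longrightarrow> (y,x) \<notin> r"
begin

lemma sigma_el_diff_lt:
  assumes "finite V" "u \<in> V" "(u,w) \<in> r"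
  shows "sigma_el r w V = Suc (sigma_el r w (V - {u}))"
proof -
  have "{v \<in> V - {u}. (v, w) \<in> r} = {v \<in> V. (v, w) \<in> r} - {u}" by auto
  moreover have "u \<in> {v \<in> V. (v, w) \<in> r}" using assms by auto
  moreover have "finite {v \<in> V. (v, w) \<in> r}" using assms by auto
  ultimately show ?thesis unfolding sigma_el_def
    using card_Suc_Diff1[of "{v \<in> V. (v, w) \<in> r}" u] by simp
qed

lemma sigma_el_diff_gt:
  assumes "(u,w) \<in> r"
  shows "sigma_el r u (V - {w}) = sigma_el r u V"
proof -
  have "{v \<in> V - {w}. (v, u) \<in> r} = {v \<in> V. (v, u) \<in> r}" using asy assms by auto
  then show ?thesis unfolding sigma_el_def by simp
qed

lemma dd_zero:
  assumes fin: "finite V" and sub: "V \<subseteq> G"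
  shows "tdiff r (tdiff_basis r a V) = ((\<lambda>_. 0) :: _ \<Rightarrow> 'k::field)"
proof
  fix z
  define s where "s u = ((-1::'k) ^ sigma_el r u V)" for u
  define x where "x u = madd a (msub (mlcm V) (mlcm (V - {u})))" for u
  have "tdiff r (tdiff_basis r a V) = lin (\<lambda>p. tdiff_basis r (fst p) (snd p))
      (\<lambda>c. \<Sum>u\<in>V. s u * tbasis (x u) (V - {u}) c)"
    unfolding tdiff_lin tdiff_basis_eq s_def x_def ..
  also have "\<dots> = (\<lambda>z. \<Sum>u\<in>V. s u * tdiff_basis r (x u) (V - {u}) z)"
    by (simp add: lin_basis_sum[OF fin])
  finally have e: "tdiff r (tdiff_basis r a V) z = (\<Sum>u\<in>V. s u * tdiff_basis r (x u) (V - {u}) z)" by simp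
  define F where "F u w = s u * (if z = (madd (x u) (msub (mlcm (V-{u})) (mlcm (V-{u}-{w}))), V-{u}-{w})
       then (-1::'k) ^ sigma_el r w (V-{u}) else 0)" for u w
  have e2: "(\<Sum>u\<in>V. s u * tdiff_basis r (x u) (V - {u}) z) = (\<Sum>u\<in>V. \<Sum>w\<in>V-{u}. F u w)"
    unfolding tdiff_basis_def F_def by (simp add: sum_distrib_left)
  have "(\<Sum>u\<in>V. \<Sum>w\<in>V-{u}. F u w) = 0"
  proof (rule pair_cancel[OF fin, of r])
    show "\<And>u w. u \<in> V \<Longrightarrow> w \<in> V \<Longrightarrow> u \<noteq> w \<Longrightarrow> (u,w) \<in> r \<or> (w,u) \<in> r"
      using tot sub by blast
    show "\<And>u w. (u,w) \<in> r \<Longrightarrow> (w,u) \<notin> r" using asy by blast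
  next
    fix u w assume u: "u \<in> V" and w: "w \<in> V" and uw: "(u,w) \<in> r"
    have S: "V-{w}-{u} = V-{u}-{w}" by auto
    have t1: "madd (x u) (msub (mlcm (V-{u})) (mlcm (V-{u}-{w}))) = madd a (msub (mlcm V) (mlcm (V-{u}-{w})))"
      unfolding x_def by (rule mono_tele[OF fin]) auto
    have t2: "madd (x w) (msub (mlcm (V-{w})) (mlcm (V-{w}-{u}))) = madd a (msub (mlcm V) (mlcm (V-{u}-{w})))"
      unfolding x_def S[symmetric] by (rule mono_tele[OF fin]) auto
    have M: "madd (x u) (msub (mlcm (V-{u})) (mlcm (V-{u}-{w}))) = madd (x w) (msub (mlcm (V-{w})) (mlcm (V-{w}-{u})))"
      by (simp only: t1 t2)
    have s1: "sigma_el r w V = Suc (sigma_el r w (V - {u}))" using sigma_el_diff_lt[OF fin u uw] .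
    have s2: "sigma_el r u (V - {w}) = sigma_el r u V" using sigma_el_diff_gt[OF uw] .
    have sg: "s w * (-1::'k) ^ sigma_el r u (V-{w}) = - (s u * (-1) ^ sigma_el r w (V-{u}))"
      unfolding s_def s1 s2 by simp
    show "F w u = - F u w" unfolding F_def M S using sg by (simp add: mult.commute)
  qed
  then show "tdiff r (tdiff_basis r a V) z = (0::'k)" using e e2 by simp
qed

end

abbreviation Jof :: "('v mon \<times> 'v mon) set \<Rightarrow> 'v mon set set \<Rightarrow> ('v mon \<times> 'v mon set \<Rightarrow> 'k::field) set" where
  "Jof r Ap \<equiv> kspan ({tbasis a V | a V. V \<in> Ap} \<union> {tdiff r (tbasis a V) | a V. V \<in> Ap})"

lemma tdiff_tbasis: "tdiff r (tbasis a V) = tdiff_basis r a V"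
  by (simp add: tdiff_lin lin_tbasis)

lemma tmul_basis_disj:
  "V \<inter> W = {} \<Longrightarrow> tmul_basis r a V b W = (\<lambda>c. (-1) ^ sigma_set r V W *
      tbasis (madd (madd a b) (msub (madd (mlcm V) (mlcm W)) (mlcm (V \<union> W)))) (V \<union> W) c)"
  unfolding tmul_basis_def tbasis_def by auto

lemma tmul_basis_ndisj: "V \<inter> W \<noteq> {} \<Longrightarrow> tmul_basis r a V b W = (\<lambda>_. 0)"
  unfolding tmul_basis_def by auto

lemma mono_prod_eq:
  assumes fW: "finite W" and fV: "finite V" and v: "v \<in> V" and vW: "v \<notin> W"
  shows "madd (madd a (madd b (msub (mlcm V) (mlcm (V-{v}))))) (msub (madd (mlcm W) (mlcm (V-{v}))) (mlcm (W \<union> (V-{v}))))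
    = madd (madd (madd a b) (msub (madd (mlcm W) (mlcm V)) (mlcm (W\<union>V)))) (msub (mlcm (W\<union>V)) (mlcm (W\<union>V-{v})))"
proof
  fix i
  have e: "W\<union>V-{v} = W \<union> (V-{v})" using vW by auto
  have fV': "finite (V-{v})" using fV by simp
  have h1: "mlcm (V-{v}) i \<le> mlcm V i" by (rule mlcm_mono[OF fV]) auto
  have h2: "mlcm (W \<union> (V-{v})) i \<le> mlcm W i + mlcm (V-{v}) i" by (rule mlcm_un_le[OF fV' fW])
  have h3: "mlcm (W \<union> V) i \<le> mlcm W i + mlcm V i" by (rule mlcm_un_le[OF fV fW])
  have h4: "mlcm (W \<union> (V-{v})) i \<le> mlcm (W \<union> V) i" by (rule mlcm_mono) (use fV fW in auto)
  show "madd (madd a (madd b (msub (mlcm V) (mlcm (V-{v}))))) (msub (madd (mlcm W) (mlcm (V-{v}))) (mlcm (W \<union> (V-{v})))) i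
    = madd (madd (madd a b) (msub (madd (mlcm W) (mlcm V)) (mlcm (W\<union>V)))) (msub (mlcm (W\<union>V)) (mlcm (W\<union>V-{v}))) i"
    unfolding e madd_def msub_def using h1 h2 h3 h4 by simp
qed

lemma taylor_closed:
  assumes "x \<in> taylor G" "g \<in> taylor G" shows "(\<lambda>p. x p + c * g p) \<in> taylor G"
proof -
  have "finite {p. x p + c * g p \<noteq> 0}"
    by (rule finite_subset[of _ "{p. x p \<noteq> 0} \<union> {p. g p \<noteq> 0}"]) (use assms in \<open>auto simp: taylor_def\<close>)
  moreover have "\<forall>a U. x (a, U) + c * g (a, U) \<noteq> 0 \<longrightarrow> finite U \<and> U \<subseteq> G"
  proof (intro allI impI)
    fix a U assume "x (a, U) + c * g (a, U) \<noteq> 0"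
    then have "x (a, U) \<noteq> 0 \<or> g (a, U) \<noteq> 0" by auto
    then show "finite U \<and> U \<subseteq> G" using assms unfolding taylor_def by blast
  qed
  ultimately show ?thesis unfolding taylor_def by blast
qed

lemma kspan_taylor:
  assumes "S \<subseteq> taylor G" shows "kspan S \<subseteq> taylor G"
proof
  fix x assume "x \<in> kspan S" then show "x \<in> taylor G"
  proof induct
    case zero then show ?case by (simp add: taylor_def)
  next
    case (add x g c) then show ?case using taylor_closed assms by blast
  qed
qed

lemma tbasis_taylor: "finite V \<Longrightarrow> V \<subseteq> G \<Longrightarrow> tbasis a V \<in> taylor G"
  unfolding taylor_def tbasis_def by (auto split: if_splits)

lemma tdiff_basis_taylor:
  assumes fin: "finite V" and sub: "V \<subseteq> G"
  shows "(tdiff_basis r a V :: _ \<Rightarrow> 'k::field) \<in> taylor G"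
proof -
  define y where "y u = madd a (msub (mlcm V) (mlcm (V - {u})))" for u
  have nz: "\<exists>u\<in>V. p = (y u, V - {u})" if "tdiff_basis r a V p \<noteq> (0::'k)" for p
  proof -
    have "(\<Sum>u\<in>V. (-1) ^ sigma_el r u V * tbasis (y u) (V - {u}) p) \<noteq> (0::'k)"
      using that unfolding tdiff_basis_eq y_def by simp
    then obtain u where "u \<in> V" "(-1) ^ sigma_el r u V * tbasis (y u) (V - {u}) p \<noteq> (0::'k)"
      by (rule sum.not_neutral_contains_not_neutral)
    then show ?thesis by (auto simp: tbasis_def split: if_splits)
  qed
  have "{p. tdiff_basis r a V p \<noteq> (0::'k)} \<subseteq> (\<lambda>u. (y u, V - {u})) ` V" using nz by blast
  then have "finite {p. tdiff_basis r a V p \<noteq> (0::'k)}" using fin finite_subset by blast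
  moreover have "\<forall>b U. tdiff_basis r a V (b, U) \<noteq> (0::'k) \<longrightarrow> finite U \<and> U \<subseteq> G"
    using nz fin sub by fastforce
  ultimately show ?thesis unfolding taylor_def by blast
qed

context tset
begin

lemma card_A:
  assumes "finite W" "finite V" "W \<inter> V = {}"
  shows "sigma_el r v (W \<union> V) = sigma_el r v V + card {w \<in> W. (w,v) \<in> r}"
proof -
  have "{x \<in> W \<union> V. (x,v) \<in> r} = {x \<in> V. (x,v) \<in> r} \<union> {x \<in> W. (x,v) \<in> r}" by auto
  moreover have "card ({x \<in> V. (x,v) \<in> r} \<union> {x \<in> W. (x,v) \<in> r}) = card {x \<in> V. (x,v) \<in> r} + card {x \<in> W. (x,v) \<in> r}"
    by (rule card_Un_disjoint) (use assms in auto)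
  ultimately show ?thesis unfolding sigma_el_def by simp
qed

lemma card_B:
  assumes fW: "finite W" and fV: "finite V" and v: "v \<in> V"
  shows "sigma_set r W V = sigma_set r W (V - {v}) + card {w \<in> W. (v,w) \<in> r}"
proof -
  let ?X = "{(w, x). w \<in> W \<and> x \<in> V - {v} \<and> (x, w) \<in> r}"
  let ?Y = "(\<lambda>w. (w, v)) ` {w \<in> W. (v,w) \<in> r}"
  have eq: "{(w, x). w \<in> W \<and> x \<in> V \<and> (x, w) \<in> r} = ?X \<union> ?Y" using v by auto
  have fX: "finite ?X" by (rule finite_subset[of _ "W \<times> V"]) (use fW fV in auto)
  have fY: "finite ?Y" using fW by simp
  have "card (?X \<union> ?Y) = card ?X + card ?Y" by (rule card_Un_disjoint[OF fX fY]) auto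
  moreover have "card ?Y = card {w \<in> W. (v,w) \<in> r}" by (rule card_image) (auto simp: inj_on_def)
  ultimately show ?thesis unfolding sigma_set_def eq by simp
qed

lemma card_C:
  assumes fW: "finite W" and WG: "W \<subseteq> G" and vG: "v \<in> G" and vW: "v \<notin> W"
  shows "card {w \<in> W. (w,v) \<in> r} + card {w \<in> W. (v,w) \<in> r} = card W"
proof -
  have "W = {w \<in> W. (w,v) \<in> r} \<union> {w \<in> W. (v,w) \<in> r}" using tot WG vG vW by fastforce
  moreover have "card ({w \<in> W. (w,v) \<in> r} \<union> {w \<in> W. (v,w) \<in> r}) = card {w \<in> W. (w,v) \<in> r} + card {w \<in> W. (v,w) \<in> r}"
    by (rule card_Un_disjoint) (use fW asy in auto)
  ultimately show ?thesis by simp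
qed

lemma sign_eq:
  assumes fW: "finite W" and fV: "finite V" and WG: "W \<subseteq> G" and VG: "V \<subseteq> G"
    and disj: "W \<inter> V = {}" and v: "v \<in> V"
  shows "(-1::'k::comm_ring_1) ^ sigma_el r v V * (-1) ^ sigma_set r W (V - {v})
       = (-1) ^ (card W + sigma_set r W V) * (-1) ^ sigma_el r v (W \<union> V)"
proof -
  have vW: "v \<notin> W" using disj v by auto
  have A: "sigma_el r v (W \<union> V) = sigma_el r v V + card {w \<in> W. (w,v) \<in> r}" by (rule card_A[OF fW fV disj])
  have B: "sigma_set r W V = sigma_set r W (V - {v}) + card {w \<in> W. (v,w) \<in> r}" by (rule card_B[OF fW fV v])
  have C: "card {w \<in> W. (w,v) \<in> r} + card {w \<in> W. (v,w) \<in> r} = card W" using card_C[OF fW WG _ vW] v VG by blast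
  have X: "card W + sigma_set r W V + sigma_el r v (W \<union> V) = (sigma_el r v V + sigma_set r W (V - {v})) + 2 * card W"
    using A B C by simp
  have h: "(-1::'k) ^ (card W + sigma_set r W V + sigma_el r v (W \<union> V)) = (-1) ^ (sigma_el r v V + sigma_set r W (V - {v}))"
    unfolding X by (simp add: power_add power_mult)
  have "(-1::'k) ^ sigma_el r v V * (-1) ^ sigma_set r W (V - {v}) = (-1) ^ (sigma_el r v V + sigma_set r W (V - {v}))"
    by (rule power_add[symmetric])
  also have "\<dots> = (-1) ^ (card W + sigma_set r W V + sigma_el r v (W \<union> V))" using h by simp
  also have "\<dots> = (-1) ^ (card W + sigma_set r W V) * (-1) ^ sigma_el r v (W \<union> V)" by (rule power_add)
  finally show ?thesis .
qed

end

locale tctx = tset +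
  fixes Ap :: "'v mon set set"
  assumes Ap_fin: "\<And>V. V \<in> Ap \<Longrightarrow> finite V \<and> V \<subseteq> G"
    and Ap_up: "\<And>V W. V \<in> Ap \<Longrightarrow> V \<subseteq> W \<Longrightarrow> W \<subseteq> G \<Longrightarrow> W \<in> Ap"
begin

lemma J_tb: "V \<in> Ap \<Longrightarrow> (tbasis a V :: _ \<Rightarrow> 'k::field) \<in> Jof r Ap"
  by (rule kspan_base) blast

lemma J_td: "V \<in> Ap \<Longrightarrow> (tdiff_basis r a V :: _ \<Rightarrow> 'k::field) \<in> Jof r Ap"
  unfolding tdiff_tbasis[symmetric] by (rule kspan_base) blast

lemma P1:
  assumes fW: "finite W" and WG: "W \<subseteq> G" and V: "V \<in> Ap"
  shows "(tmul_basis r a W b V :: _ \<Rightarrow> 'k::field) \<in> Jof r Ap"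
proof (cases "W \<inter> V = {}")
  case True
  have "W \<union> V \<in> Ap" using Ap_up[OF V] Ap_fin[OF V] WG by blast
  then show ?thesis unfolding tmul_basis_disj[OF True]
    by (intro kspan_smult kspan_base) blast
next
  case False
  then show ?thesis unfolding tmul_basis_ndisj[OF False] by (rule_tac kspan.zero)
qed

lemma P2_ndisj:
  assumes fW: "finite W" and WG: "W \<subseteq> G" and V: "V \<in> Ap" and nd: "W \<inter> V \<noteq> {}"
  shows "lin (\<lambda>q. tmul_basis r a W (fst q) (snd q)) (tdiff_basis r b V) \<in> (Jof r Ap :: (_ \<Rightarrow> 'k::field) set)"
proof -
  have fV: "finite V" and VG: "V \<subseteq> G" using Ap_fin[OF V] by auto
  have L: "lin (\<lambda>q. tmul_basis r a W (fst q) (snd q)) (tdiff_basis r b V) = (\<lambda>z. \<Sum>v\<in>V. (-1::'k) ^ sigma_el r v V *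
      tmul_basis r a W (madd b (msub (mlcm V) (mlcm (V-{v})))) (V-{v}) z)"
    unfolding tdiff_basis_eq by (simp add: lin_basis_sum[OF fV])
  show ?thesis unfolding L
  proof (rule kspan_sum[OF fV])
    fix v assume v: "v \<in> V"
    show "(\<lambda>z. (-1::'k) ^ sigma_el r v V * tmul_basis r a W (madd b (msub (mlcm V) (mlcm (V-{v})))) (V-{v}) z) \<in> Jof r Ap"
    proof (cases "W \<inter> (V - {v}) = {}")
      case True
      then have "v \<in> W" using nd by auto
      then have "W \<union> (V - {v}) \<in> Ap" using Ap_up[OF V, of "W \<union> (V - {v})"] WG VG by blast
      then show ?thesis unfolding tmul_basis_disj[OF True] mult.assoc[symmetric]
        by (intro kspan_smult kspan_base) blast
    next
      case False
      then show ?thesis unfolding tmul_basis_ndisj[OF False] by (simp add: kspan.zero)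
    qed
  qed
qed

lemma P2_disj:
  assumes fW: "finite W" and WG: "W \<subseteq> G" and V: "V \<in> Ap" and disj: "W \<inter> V = {}"
  shows "lin (\<lambda>q. tmul_basis r a W (fst q) (snd q)) (tdiff_basis r b V) \<in> (Jof r Ap :: (_ \<Rightarrow> 'k::field) set)"
proof -
  have fV: "finite V" and VG: "V \<subseteq> G" using Ap_fin[OF V] by auto
  define U where "U = W \<union> V"
  have UAp: "U \<in> Ap" using Ap_up[OF V, of U] WG VG by (auto simp: U_def)
  have fU: "finite U" using fW fV by (simp add: U_def)
  define c0 where "c0 = madd (madd a b) (msub (madd (mlcm W) (mlcm V)) (mlcm U))"
  define eps where "eps = (-1::'k) ^ (card W + sigma_set r W V)"
  define T where "T x z = (if z = (madd c0 (msub (mlcm U) (mlcm (U - {x}))), U - {x}) then (-1::'k) ^ sigma_el r x U else 0)" for x z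
  have L: "lin (\<lambda>q. tmul_basis r a W (fst q) (snd q)) (tdiff_basis r b V) = (\<lambda>z. \<Sum>v\<in>V. (-1::'k) ^ sigma_el r v V *
      tmul_basis r a W (madd b (msub (mlcm V) (mlcm (V-{v})))) (V-{v}) z)"
    unfolding tdiff_basis_eq by (simp add: lin_basis_sum[OF fV])
  have trm: "(-1::'k) ^ sigma_el r v V * tmul_basis r a W (madd b (msub (mlcm V) (mlcm (V-{v})))) (V-{v}) z = eps * T v z"
    if v: "v \<in> V" for v z
  proof -
    have d: "W \<inter> (V-{v}) = {}" using disj by auto
    have vW: "v \<notin> W" using disj v by auto
    have UU: "W \<union> (V-{v}) = U - {v}" using vW by (auto simp: U_def)
    have E: "madd (madd a (madd b (msub (mlcm V) (mlcm (V-{v}))))) (msub (madd (mlcm W) (mlcm (V-{v}))) (mlcm (W \<union> (V-{v}))))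
        = madd c0 (msub (mlcm U) (mlcm (U-{v})))"
      unfolding c0_def U_def using mono_prod_eq[OF fW fV v vW] by simp
    have sg: "(-1::'k) ^ sigma_el r v V * (-1) ^ sigma_set r W (V - {v}) = eps * (-1) ^ sigma_el r v U"
      unfolding eps_def U_def by (rule sign_eq[OF fW fV WG VG disj v])
    show ?thesis unfolding tmul_basis_disj[OF d] tbasis_def unfolding E unfolding UU T_def
      using sg by (simp add: mult.assoc[symmetric])
  qed
  have R: "(\<lambda>z. \<Sum>x\<in>W. T x z) \<in> Jof r Ap"
  proof (rule kspan_sum[OF fW])
    fix x assume x: "x \<in> W"
    have "U - {x} \<in> Ap" using Ap_up[OF V, of "U - {x}"] x disj WG VG by (auto simp: U_def)
    moreover have "T x = (\<lambda>z. (-1::'k) ^ sigma_el r x U * tbasis (madd c0 (msub (mlcm U) (mlcm (U - {x})))) (U - {x}) z)"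
      unfolding T_def tbasis_def by (rule ext) simp
    ultimately show "T x \<in> Jof r Ap" by (simp only:) (rule kspan_smult[OF J_tb])
  qed
  have D: "tdiff_basis r c0 U \<in> (Jof r Ap :: (_ \<Rightarrow> 'k) set)" by (rule J_td[OF UAp])
  have Dsplit: "tdiff_basis r c0 U z = (\<Sum>x\<in>W. T x z) + (\<Sum>x\<in>V. T x z)" for z
    unfolding tdiff_basis_def T_def U_def by (rule sum.union_disjoint[OF fW fV disj])
  have "lin (\<lambda>q. tmul_basis r a W (fst q) (snd q)) (tdiff_basis r b V) = (\<lambda>z. eps * tdiff_basis r c0 U z + (- eps) * (\<Sum>x\<in>W. T x z))"
  proof
    fix z
    have "lin (\<lambda>q. tmul_basis r a W (fst q) (snd q)) (tdiff_basis r b V) z = (\<Sum>v\<in>V. eps * T v z)"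
      unfolding L using trm by simp
    also have "\<dots> = eps * tdiff_basis r c0 U z + (- eps) * (\<Sum>x\<in>W. T x z)"
      unfolding Dsplit by (simp add: sum_distrib_left[symmetric] ring_distribs)
    finally show "lin (\<lambda>q. tmul_basis r a W (fst q) (snd q)) (tdiff_basis r b V) z = eps * tdiff_basis r c0 U z + (- eps) * (\<Sum>x\<in>W. T x z)" .
  qed
  then show ?thesis using kspan_lin_comb[OF D R, of eps "- eps"] by (simp only:)
qed

end

context tctx
begin

lemma tmul_tbasis_J:
  assumes fW: "finite W" and WG: "W \<subseteq> G" and j: "j \<in> (Jof r Ap :: (_ \<Rightarrow> 'k::field) set)"
  shows "tmul r (tbasis a W) j \<in> Jof r Ap"
  unfolding tmul_lin
proof (rule conjunct2[OF kspan_lin[OF j]])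
  fix g :: "_ \<Rightarrow> 'k"
  assume g: "g \<in> {tbasis a V | a V. V \<in> Ap} \<union> {tdiff r (tbasis a V) | a V. V \<in> Ap}"
  then show "finite (tsupp g) \<and> lin (\<lambda>q. tmul_basis r a W (fst q) (snd q)) g \<in> Jof r Ap"
  proof
    assume "g \<in> {tbasis a V | a V. V \<in> Ap}"
    then obtain b V where gd: "g = tbasis b V" and V: "V \<in> Ap" by blast
    have "tsupp g = {(b,V)}" unfolding gd by (auto simp: tsupp_def tbasis_def)
    then show ?thesis unfolding gd lin_tbasis using P1[OF fW WG V] by simp
  next
    assume "g \<in> {tdiff r (tbasis a V) | a V. V \<in> Ap}"
    then obtain b V where gd: "g = tdiff_basis r b V" and V: "V \<in> Ap" by (auto simp: tdiff_tbasis)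
    have "g \<in> taylor G" unfolding gd using tdiff_basis_taylor Ap_fin[OF V] by blast
    then have "finite (tsupp g)" by (simp add: taylor_def tsupp_def)
    moreover have "lin (\<lambda>q. tmul_basis r a W (fst q) (snd q)) g \<in> Jof r Ap"
      unfolding gd using P2_disj[OF fW WG V] P2_ndisj[OF fW WG V] by blast
    ultimately show ?thesis by blast
  qed
qed

lemma dg: "dg_ideal G r (Jof r Ap :: (_ \<Rightarrow> 'k::field) set)"
  unfolding dg_ideal_def
proof (intro conjI ballI)
  show "(Jof r Ap :: (_ \<Rightarrow> 'k::field) set) \<subseteq> taylor G"
    by (rule kspan_taylor) (auto simp: tdiff_tbasis dest: Ap_fin intro: tbasis_taylor tdiff_basis_taylor)
next
  fix j :: "_ \<Rightarrow> 'k" assume j: "j \<in> Jof r Ap"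
  have e: "tdiff r j = lin (\<lambda>p. tdiff_basis r (fst p) (snd p)) j" by (rule tdiff_lin)
  have "lin (\<lambda>p. tdiff_basis r (fst p) (snd p)) j \<in> Jof r Ap"
  proof (rule conjunct2[OF kspan_lin[OF j]])
    fix g :: "_ \<Rightarrow> 'k"
    assume g: "g \<in> {tbasis a V | a V. V \<in> Ap} \<union> {tdiff r (tbasis a V) | a V. V \<in> Ap}"
    then show "finite (tsupp g) \<and> lin (\<lambda>p. tdiff_basis r (fst p) (snd p)) g \<in> Jof r Ap"
    proof
      assume "g \<in> {tbasis a V | a V. V \<in> Ap}"
      then obtain b V where gd: "g = tbasis b V" and V: "V \<in> Ap" by blast
      have "tsupp g = {(b,V)}" unfolding gd by (auto simp: tsupp_def tbasis_def)
      then show ?thesis unfolding gd lin_tbasis using J_td[OF V] by simp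
    next
      assume "g \<in> {tdiff r (tbasis a V) | a V. V \<in> Ap}"
      then obtain b V where gd: "g = tdiff_basis r b V" and V: "V \<in> Ap" by (auto simp: tdiff_tbasis)
      have "g \<in> taylor G" unfolding gd using tdiff_basis_taylor Ap_fin[OF V] by blast
      then have "finite (tsupp g)" by (simp add: taylor_def tsupp_def)
      moreover have "lin (\<lambda>p. tdiff_basis r (fst p) (snd p)) g = (\<lambda>_. 0)"
        unfolding gd tdiff_lin[symmetric] using dd_zero Ap_fin[OF V] by blast
      ultimately show ?thesis by (simp add: kspan.zero)
    qed
  qed
  then show "tdiff r j \<in> Jof r Ap" by (simp only: e)
next
  fix f :: "_ \<Rightarrow> 'k" and j :: "_ \<Rightarrow> 'k"
  assume f: "f \<in> taylor G" and j: "j \<in> Jof r Ap"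
  have ff: "finite (tsupp f)" using f by (simp add: taylor_def tsupp_def)
  show "tmul r f j \<in> Jof r Ap" unfolding tmul_split[OF ff]
  proof (rule kspan_sum[OF ff])
    fix p assume p: "p \<in> tsupp f"
    then have "f (fst p, snd p) \<noteq> 0" by (simp add: tsupp_def)
    then have "finite (snd p) \<and> snd p \<subseteq> G" using f unfolding taylor_def by blast
    then show "(\<lambda>c. f p * tmul r (tbasis (fst p) (snd p)) j c) \<in> Jof r Ap"
      using tmul_tbasis_J j kspan_smult by blast
  qed
qed

end

theorem mainTheorem1:
  fixes I :: "('v::finite) mon set"
    and r :: "('v mon \<times> 'v mon) set"
    and A :: "('v mon set \<times> 'v mon set) set"
  assumes "mono_ideal I"
    and "strict_linear_order_on (mingens I) r"
    and "morse_matching (mingens I) A"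
    and "\<And>V W. V \<in> fst ` A \<Longrightarrow> V \<subseteq> W \<Longrightarrow> W \<subseteq> mingens I \<Longrightarrow> W \<in> fst ` A"
  shows "dg_ideal (mingens I) r (induced_sub r A :: ('v mon \<times> 'v mon set \<Rightarrow> 'k::field) set)"
proof -
  have so: "trans r" "irrefl r" "total_on (mingens I) r"
    using assms(2) unfolding strict_linear_order_on_def by auto
  interpret tctx "mingens I" r "fst ` A"
  proof
    show "\<And>x y. x \<in> mingens I \<Longrightarrow> y \<in> mingens I \<Longrightarrow> x \<noteq> y \<Longrightarrow> (x, y) \<in> r \<or> (y, x) \<in> r"
      using so(3) unfolding total_on_def by blast
    show "\<And>x y. (x, y) \<in> r \<Longrightarrow> (y, x) \<notin> r"
      using so(1,2) unfolding trans_def irrefl_def by blast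
    show "finite V \<and> V \<subseteq> mingens I" if VA: "V \<in> fst ` A" for V
    proof -
      obtain t where "(V, t) \<in> A" using VA by force
      then have "(V, t) \<in> taylor_edges (mingens I)" using assms(3) unfolding morse_matching_def by blast
      then show ?thesis unfolding taylor_edges_def by blast
    qed
    show "\<And>V W. V \<in> fst ` A \<Longrightarrow> V \<subseteq> W \<Longrightarrow> W \<subseteq> mingens I \<Longrightarrow> W \<in> fst ` A"
      by (rule assms(4))
  qed
  show ?thesis unfolding induced_sub_def by (rule dg)
qed
end
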